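(* Let $A$, $\kappa$, $I_0=\{i_1<\dots<i_N\}$, $\tilde\phi$ be as in the context. Let $1\le n\le N$, let $k_1,\dots,k_n\in\{1,\dots,N\}$ be distinct rows and $j_1,\dots,j_n\in[M]\setminus I_0$ distinct non-pivot columns with $a_{k_r,j_r}\ne0$ for all $r$. Let $J=(I_0\setminus\{i_{k_1},\dots,i_{k_n}\})\cup\{j_1,\dots,j_n\}$. Then $$\Big|\prod_{r=1}^n a_{k_r,j_r}\Big|\frac{E_J}{E_{I_0}}=\Big|\prod_{1\le r<r'\le n}C_{r,r'}\Big|\exp\Big(\sum_{r=1}^n\tilde\phi_{(k_r,j_r)}\Big),\qquad C_{r,r'}=\frac{(\kappa_{i_{k_r}}-\kappa_{i_{k_{r'}}})(\kappa_{j_r}-\kappa_{j_{r'}})}{(\kappa_{i_{k_r}}-\kappa_{j_{r'}})(\kappa_{j_r}-\kappa_{i_{k_{r'}}})}.$$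
   Context: $\kappa_1<\dots<\kappa_M$ are real; $\xi_j=\kappa_jx+\kappa_j^2y+\kappa_j^3t$; for $I=\{i_1<\dots<i_N\}$, $E_I=\prod_{a<b}(\kappa_{i_b}-\kappa_{i_a})\exp(\sum_a\xi_{i_a})$ (indices listed increasingly). $A=(a_{k,j})$ is a real $N\times M$ rank-$N$ matrix in reduced row echelon form with pivot columns $I_0=\{i_1<\dots<i_N\}$ (pivot of row $k$ in column $i_k$). For each row $k$ and each non-pivot column $j$ with $a_{k,j}\ne0$, define $\phi_{(k,j)}=\xi_j-\xi_{i_k}$, $e^{\phi^0_{(k,j)}}=|a_{k,j}|\prod_{m\ne k}|\kappa_{i_m}-\kappa_j|/\prod_{m\ne k}|\kappa_{i_m}-\kappa_{i_k}|$, and $\tilde\phi_{(k,j)}=\phi_{(k,j)}+\phi^0_{(k,j)}$. *)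

theory Defs
  imports Complex_Main
begin

definition xi :: "(nat \<Rightarrow> real) \<Rightarrow> real \<Rightarrow> real \<Rightarrow> real \<Rightarrow> nat \<Rightarrow> real" where
  "xi \<kappa> x y t j = \<kappa> j * x + (\<kappa> j)^2 * y + (\<kappa> j)^3 * t"

text \<open>E_I = prod_{a<b} (kappa_{i_b} - kappa_{i_a}) exp(sum_a xi_{i_a}), indices of I listed
  increasingly; the pairs a<b are exactly the pairs (p,q) of elements of I with p<q.\<close>
definition E :: "(nat \<Rightarrow> real) \<Rightarrow> real \<Rightarrow> real \<Rightarrow> real \<Rightarrow> nat set \<Rightarrow> real" where
  "E \<kappa> x y t I =
     (\<Prod>(p,q)\<in>{(p,q). p \<in> I \<and> q \<in> I \<and> p < q}. \<kappa> q - \<kappa> p) * exp (\<Sum>i\<in>I. xi \<kappa> x y t i)"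

text \<open>A (rows 1..N, columns 1..M) is in reduced row echelon form with pivot of row k in
  column piv k, where piv is strictly increasing on 1..N (hence rank N).\<close>
definition rref :: "nat \<Rightarrow> nat \<Rightarrow> (nat \<Rightarrow> nat \<Rightarrow> real) \<Rightarrow> (nat \<Rightarrow> nat) \<Rightarrow> bool" where
  "rref N M A piv \<longleftrightarrow>
     (\<forall>k\<in>{1..N}. piv k \<in> {1..M}) \<and>
     (\<forall>k\<in>{1..N}. \<forall>k'\<in>{1..N}. k < k' \<longrightarrow> piv k < piv k') \<and>
     (\<forall>k\<in>{1..N}. A k (piv k) = 1) \<and>
     (\<forall>k\<in>{1..N}. \<forall>m\<in>{1..N}. m \<noteq> k \<longrightarrow> A m (piv k) = 0) \<and>
     (\<forall>k\<in>{1..N}. \<forall>j\<in>{1..M}. j < piv k \<longrightarrow> A k j = 0)"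

definition phi :: "(nat \<Rightarrow> real) \<Rightarrow> real \<Rightarrow> real \<Rightarrow> real \<Rightarrow> (nat \<Rightarrow> nat) \<Rightarrow> nat \<Rightarrow> nat \<Rightarrow> real" where
  "phi \<kappa> x y t piv k j = xi \<kappa> x y t j - xi \<kappa> x y t (piv k)"

definition phi0 :: "nat \<Rightarrow> (nat \<Rightarrow> nat \<Rightarrow> real) \<Rightarrow> (nat \<Rightarrow> real) \<Rightarrow> (nat \<Rightarrow> nat) \<Rightarrow> nat \<Rightarrow> nat \<Rightarrow> real" where
  "phi0 N A \<kappa> piv k j =
     ln (\<bar>A k j\<bar> * (\<Prod>m\<in>{1..N} - {k}. \<bar>\<kappa> (piv m) - \<kappa> j\<bar>)
          / (\<Prod>m\<in>{1..N} - {k}. \<bar>\<kappa> (piv m) - \<kappa> (piv k)\<bar>))"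

definition phit :: "nat \<Rightarrow> (nat \<Rightarrow> nat \<Rightarrow> real) \<Rightarrow> (nat \<Rightarrow> real) \<Rightarrow> real \<Rightarrow> real \<Rightarrow> real
                     \<Rightarrow> (nat \<Rightarrow> nat) \<Rightarrow> nat \<Rightarrow> nat \<Rightarrow> real" where
  "phit N A \<kappa> x y t piv k j = phi \<kappa> x y t piv k j + phi0 N A \<kappa> piv k j"

end

theory Submission
  imports Defs
begin

lemma F_union:
  fixes g :: "'a \<Rightarrow> 'a \<Rightarrow> real"
  assumes sym: "\<And>p q. g p q = g q p" and fin: "finite R" "finite U" and dis: "R \<inter> U = {}"
  shows "(\<Prod>p\<in>R\<union>U. \<Prod>q\<in>(R\<union>U)-{p}. g p q) =
         (\<Prod>p\<in>R. \<Prod>q\<in>R-{p}. g p q) * (\<Prod>p\<in>U. \<Prod>q\<in>U-{p}. g p q) * (\<Prod>p\<in>R. \<Prod>q\<in>U. g p q)^2"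
proof -
  have "(\<Prod>p\<in>R\<union>U. \<Prod>q\<in>(R\<union>U)-{p}. g p q) =
        (\<Prod>p\<in>R. \<Prod>q\<in>(R\<union>U)-{p}. g p q) * (\<Prod>p\<in>U. \<Prod>q\<in>(R\<union>U)-{p}. g p q)"
    using fin dis by (simp add: prod.union_disjoint)
  also have "(\<Prod>p\<in>R. \<Prod>q\<in>(R\<union>U)-{p}. g p q) = (\<Prod>p\<in>R. (\<Prod>q\<in>R-{p}. g p q) * (\<Prod>q\<in>U. g p q))"
  proof (rule prod.cong[OF refl])
    fix p assume p: "p \<in> R"
    have "(R\<union>U)-{p} = (R-{p}) \<union> U" using p dis by auto
    thus "(\<Prod>q\<in>(R\<union>U)-{p}. g p q) = (\<Prod>q\<in>R-{p}. g p q) * (\<Prod>q\<in>U. g p q)"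
      using fin dis by (simp only:) (rule prod.union_disjoint; auto)
  qed
  also have "(\<Prod>p\<in>U. \<Prod>q\<in>(R\<union>U)-{p}. g p q) = (\<Prod>p\<in>U. (\<Prod>q\<in>R. g p q) * (\<Prod>q\<in>U-{p}. g p q))"
  proof (rule prod.cong[OF refl])
    fix p assume p: "p \<in> U"
    have "(R\<union>U)-{p} = R \<union> (U-{p})" using p dis by auto
    thus "(\<Prod>q\<in>(R\<union>U)-{p}. g p q) = (\<Prod>q\<in>R. g p q) * (\<Prod>q\<in>U-{p}. g p q)"
      using fin dis by (simp only:) (rule prod.union_disjoint; auto)
  qed
  also have "(\<Prod>p\<in>R. (\<Prod>q\<in>R-{p}. g p q) * (\<Prod>q\<in>U. g p q)) * (\<Prod>p\<in>U. (\<Prod>q\<in>R. g p q) * (\<Prod>q\<in>U-{p}. g p q))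
     = (\<Prod>p\<in>R. \<Prod>q\<in>R-{p}. g p q) * (\<Prod>p\<in>R. \<Prod>q\<in>U. g p q) * ((\<Prod>p\<in>U. \<Prod>q\<in>R. g p q) * (\<Prod>p\<in>U. \<Prod>q\<in>U-{p}. g p q))"
    by (simp only: prod.distrib)
  also have "(\<Prod>p\<in>U. \<Prod>q\<in>R. g p q) = (\<Prod>p\<in>R. \<Prod>q\<in>U. g p q)"
    by (subst prod.swap) (simp add: sym)
  finally show ?thesis
    by (simp only: power2_eq_square mult_ac)
qed

lemma offdiag_If:
  fixes h :: "'a \<Rightarrow> 'a \<Rightarrow> real"
  assumes "finite I"
  shows "(\<Prod>r\<in>I. \<Prod>r'\<in>I-{r}. h r r') = (\<Prod>r\<in>I. \<Prod>r'\<in>I. if r = r' then 1 else h r r')"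
proof (rule prod.cong[OF refl])
  fix r assume "r \<in> I"
  show "(\<Prod>r'\<in>I-{r}. h r r') = (\<Prod>r'\<in>I. if r = r' then 1 else h r r')"
    using assms by (subst prod.If_cases) (auto intro!: prod.cong simp: Diff_eq)
qed

lemma offdiag_swap:
  fixes h :: "'a \<Rightarrow> 'a \<Rightarrow> real"
  assumes "finite I"
  shows "(\<Prod>r\<in>I. \<Prod>r'\<in>I-{r}. h r r') = (\<Prod>r\<in>I. \<Prod>r'\<in>I-{r}. h r' r)"
proof -
  have "(\<Prod>r\<in>I. \<Prod>r'\<in>I-{r}. h r r') = (\<Prod>r\<in>I. \<Prod>r'\<in>I. if r = r' then 1 else h r r')"
    by (rule offdiag_If[OF assms])
  also have "\<dots> = (\<Prod>r'\<in>I. \<Prod>r\<in>I. if r = r' then 1 else h r r')"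
    by (rule prod.swap)
  also have "\<dots> = (\<Prod>r\<in>I. \<Prod>r'\<in>I. if r = r' then 1 else h r' r)"
    by (intro prod.cong refl) auto
  also have "\<dots> = (\<Prod>r\<in>I. \<Prod>r'\<in>I-{r}. h r' r)"
    by (rule offdiag_If[OF assms, symmetric])
  finally show ?thesis .
qed

lemma reindex_pairs:
  fixes g :: "'b \<Rightarrow> 'b \<Rightarrow> real"
  assumes "inj_on f I"
  shows "(\<Prod>p\<in>f`I. \<Prod>q\<in>f`I-{p}. g p q) = (\<Prod>r\<in>I. \<Prod>r'\<in>I-{r}. g (f r) (f r'))"
proof -
  have "(\<Prod>p\<in>f`I. \<Prod>q\<in>f`I-{p}. g p q) = (\<Prod>r\<in>I. \<Prod>q\<in>f`I-{f r}. g (f r) q)"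
    using assms by (simp add: prod.reindex)
  also have "\<dots> = (\<Prod>r\<in>I. \<Prod>r'\<in>I-{r}. g (f r) (f r'))"
  proof (rule prod.cong[OF refl])
    fix r assume r: "r \<in> I"
    have "f`I-{f r} = f`(I-{r})" using assms r by (auto simp: inj_on_def)
    moreover have "inj_on f (I-{r})" using assms by (rule inj_on_subset) auto
    ultimately show "(\<Prod>q\<in>f`I-{f r}. g (f r) q) = (\<Prod>r'\<in>I-{r}. g (f r) (f r'))"
      by (simp add: prod.reindex)
  qed
  finally show ?thesis .
qed

lemma sq_pairs:
  fixes g :: "nat \<Rightarrow> nat \<Rightarrow> real"
  assumes sym: "\<And>p q. g p q = g q p" and fin: "finite S"
  shows "(\<Prod>(p,q)\<in>{(p,q). p\<in>S \<and> q\<in>S \<and> p<q}. g p q)^2 = (\<Prod>p\<in>S. \<Prod>q\<in>S-{p}. g p q)"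
proof -
  let ?L = "{(p,q). p\<in>S \<and> q\<in>S \<and> p<q}" and ?G = "{(p,q). p\<in>S \<and> q\<in>S \<and> q<p}"
  have finL: "finite ?L" by (rule finite_subset[of _ "S \<times> S"]) (use fin in auto)
  have finG: "finite ?G" by (rule finite_subset[of _ "S \<times> S"]) (use fin in auto)
  have "(\<Prod>p\<in>S. \<Prod>q\<in>S-{p}. g p q) = (\<Prod>(p,q)\<in>(SIGMA p:S. S-{p}). g p q)"
    by (rule prod.Sigma) (use fin in auto)
  also have "(SIGMA p:S. S-{p}) = ?L \<union> ?G" by auto
  also have "(\<Prod>(p,q)\<in>?L \<union> ?G. g p q) = (\<Prod>(p,q)\<in>?L. g p q) * (\<Prod>(p,q)\<in>?G. g p q)"
    by (rule prod.union_disjoint) (use finL finG in auto)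
  also have "?G = (\<lambda>(p,q). (q,p)) ` ?L" by auto
  also have "(\<Prod>(p,q)\<in>(\<lambda>(p,q). (q,p)) ` ?L. g p q) = (\<Prod>(p,q)\<in>?L. g q p)"
    by (subst prod.reindex) (auto simp: inj_on_def case_prod_beta)
  also have "(\<Prod>(p,q)\<in>?L. g q p) = (\<Prod>(p,q)\<in>?L. g p q)" by (simp add: sym)
  finally show ?thesis by (simp add: power2_eq_square)
qed


lemma c_sym_aux:
  fixes a b c d :: real
  shows "((a - b) * (c - d)) / ((a - d) * (c - b)) = ((b - a) * (d - c)) / ((b - c) * (d - a))"
proof -
  have 1: "(b - a) * (d - c) = (a - b) * (c - d)" by algebra
  have 2: "(b - c) * (d - a) = (a - d) * (c - b)" by algebra
  show ?thesis by (simp only: 1 2)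
qed

theorem mainTheorem6:
  fixes N M n :: nat and \<kappa> :: "nat \<Rightarrow> real" and A :: "nat \<Rightarrow> nat \<Rightarrow> real"
    and piv :: "nat \<Rightarrow> nat" and kr jr :: "nat \<Rightarrow> nat" and x y t :: real
  assumes kappa_mono: "\<And>p q. p \<in> {1..M} \<Longrightarrow> q \<in> {1..M} \<Longrightarrow> p < q \<Longrightarrow> \<kappa> p < \<kappa> q"
    and A_rref: "rref N M A piv"
    and n_range: "1 \<le> n" "n \<le> N"
    and kr_range: "\<And>r. r \<in> {1..n} \<Longrightarrow> kr r \<in> {1..N}"
    and kr_inj: "inj_on kr {1..n}"
    and jr_range: "\<And>r. r \<in> {1..n} \<Longrightarrow> jr r \<in> {1..M} - piv ` {1..N}"
    and jr_inj: "inj_on jr {1..n}"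
    and nonzero: "\<And>r. r \<in> {1..n} \<Longrightarrow> A (kr r) (jr r) \<noteq> 0"
  shows "\<bar>\<Prod>r\<in>{1..n}. A (kr r) (jr r)\<bar> *
           E \<kappa> x y t ((piv ` {1..N} - piv ` kr ` {1..n}) \<union> jr ` {1..n}) / E \<kappa> x y t (piv ` {1..N})
         = \<bar>\<Prod>(r,r')\<in>{(r,r'). r \<in> {1..n} \<and> r' \<in> {1..n} \<and> r < r'}.
              ((\<kappa> (piv (kr r)) - \<kappa> (piv (kr r'))) * (\<kappa> (jr r) - \<kappa> (jr r')))
              / ((\<kappa> (piv (kr r)) - \<kappa> (jr r')) * (\<kappa> (jr r) - \<kappa> (piv (kr r'))))\<bar>
           * exp (\<Sum>r\<in>{1..n}. phit N A \<kappa> x y t piv (kr r) (jr r))"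
proof -
  have pivM: "\<And>k. k \<in> {1..N} \<Longrightarrow> piv k \<in> {1..M}" using A_rref unfolding rref_def by blast
  have pivmono: "\<And>k k'. k \<in> {1..N} \<Longrightarrow> k' \<in> {1..N} \<Longrightarrow> k < k' \<Longrightarrow> piv k < piv k'"
    using A_rref unfolding rref_def by blast
  have inj_piv: "inj_on piv {1..N}"
  proof (rule inj_onI)
    fix a b assume ab: "a \<in> {1..N}" "b \<in> {1..N}" "piv a = piv b"
    show "a = b"
    proof (rule ccontr)
      assume "a \<noteq> b"
      hence "a < b \<or> b < a" by arith
      thus False using pivmono[OF ab(1,2)] pivmono[OF ab(2,1)] ab(3) by auto
    qed
  qed
  define g where "g = (\<lambda>p q. \<bar>\<kappa> p - \<kappa> q\<bar>)"
  have gsym: "\<And>p q. g p q = g q p" unfolding g_def by simp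
  have gpos: "\<And>p q. p \<in> {1..M} \<Longrightarrow> q \<in> {1..M} \<Longrightarrow> p \<noteq> q \<Longrightarrow> g p q > 0"
  proof -
    fix p q assume pq: "p \<in> {1..M}" "q \<in> {1..M}" "p \<noteq> q"
    hence "p < q \<or> q < p" by arith
    thus "g p q > 0" using kappa_mono[OF pq(1,2)] kappa_mono[OF pq(2,1)] unfolding g_def by auto
  qed
  define Fs where "Fs = (\<lambda>S. \<Prod>p\<in>S. \<Prod>q\<in>S-{p}. g p q)"
  define sx where "sx = (\<lambda>S. \<Sum>i\<in>S. xi \<kappa> x y t i)"
  define Vp where "Vp = (\<lambda>S. \<Prod>(p,q)\<in>{(p,q). p \<in> S \<and> q \<in> S \<and> p < q}. \<kappa> q - \<kappa> p)"
  have Efact: "E \<kappa> x y t S = Vp S * exp (sx S) \<and> Vp S > 0 \<and> (Vp S)^2 = Fs S" if S: "S \<subseteq> {1..M}" for S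
  proof -
    have finS: "finite S" using S finite_subset by blast
    have "Vp S = (\<Prod>(p,q)\<in>{(p,q). p \<in> S \<and> q \<in> S \<and> p < q}. g p q)"
      unfolding Vp_def
    proof (rule prod.cong[OF refl])
      fix z assume "z \<in> {(p,q). p \<in> S \<and> q \<in> S \<and> p < q}"
      then obtain p q where z: "z = (p,q)" "p \<in> S" "q \<in> S" "p < q" by auto
      have "\<kappa> p < \<kappa> q" using z S by (intro kappa_mono) auto
      thus "(case z of (p,q) \<Rightarrow> \<kappa> q - \<kappa> p) = (case z of (p,q) \<Rightarrow> g p q)" using z unfolding g_def by simp
    qed
    moreover have "(\<Prod>(p,q)\<in>{(p,q). p \<in> S \<and> q \<in> S \<and> p < q}. g p q) > 0"
      by (rule prod_pos) (use S in \<open>auto intro!: gpos\<close>)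
    moreover have "(\<Prod>(p,q)\<in>{(p,q). p \<in> S \<and> q \<in> S \<and> p < q}. g p q)^2 = Fs S"
      unfolding Fs_def by (rule sq_pairs[OF gsym finS])
    ultimately show ?thesis unfolding E_def Vp_def sx_def by simp
  qed
  define P where "P = piv ` {1..N}"
  define U where "U = piv ` kr ` {1..n}"
  define R where "R = P - U"
  define V where "V = jr ` {1..n}"
  define pu where "pu = (\<lambda>r. piv (kr r))"
  have inj_pu: "inj_on pu {1..n}"
  proof -
    have "inj_on piv (kr ` {1..n})" using inj_piv by (rule inj_on_subset) (use kr_range in auto)
    hence "inj_on (piv \<circ> kr) {1..n}" using kr_inj by (intro comp_inj_on)
    thus ?thesis unfolding pu_def by (simp add: comp_def)
  qed
  have U_pu: "U = pu ` {1..n}" unfolding U_def pu_def by auto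
  have finP: "finite P" and finU: "finite U" and finR: "finite R" and finV: "finite V"
    unfolding P_def U_def R_def V_def by auto
  have UP: "U \<subseteq> P" unfolding U_def P_def using kr_range by auto
  have PM: "P \<subseteq> {1..M}" unfolding P_def using pivM by auto
  have VM: "V \<subseteq> {1..M}" unfolding V_def using jr_range by auto
  have jrnP: "\<And>r. r \<in> {1..n} \<Longrightarrow> jr r \<notin> P" using jr_range unfolding P_def by blast
  have VP: "V \<inter> P = {}" unfolding V_def using jrnP by blast
  have RU: "R \<inter> U = {}" unfolding R_def by auto
  have RV: "R \<inter> V = {}" unfolding R_def using VP by auto
  have PRU: "P = R \<union> U" unfolding R_def using UP by auto
  have RM: "R \<subseteq> {1..M}" using PM unfolding R_def by auto
  have puP: "\<And>r. r \<in> {1..n} \<Longrightarrow> pu r \<in> P" unfolding pu_def P_def using kr_range by auto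
  have jrM: "\<And>r. r \<in> {1..n} \<Longrightarrow> jr r \<in> {1..M}" using jr_range by auto
  have puM: "\<And>r. r \<in> {1..n} \<Longrightarrow> pu r \<in> {1..M}" using puP PM by blast
  have puR: "\<And>r. r \<in> {1..n} \<Longrightarrow> pu r \<notin> R" unfolding R_def U_pu by auto
  have Bdec: "(\<Prod>m\<in>{1..N} - {kr r}. \<bar>\<kappa> (piv m) - \<kappa> z\<bar>)
      = (\<Prod>q\<in>R. g q z) * (\<Prod>r'\<in>{1..n}-{r}. g (pu r') z)" if r: "r \<in> {1..n}" for r z
  proof -
    have "inj_on piv ({1..N} - {kr r})" using inj_piv by (rule inj_on_subset) auto
    hence "(\<Prod>m\<in>{1..N} - {kr r}. \<bar>\<kappa> (piv m) - \<kappa> z\<bar>) = (\<Prod>q\<in>piv ` ({1..N} - {kr r}). g q z)"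
      unfolding g_def by (simp add: prod.reindex)
    also have "piv ` ({1..N} - {kr r}) = R \<union> (U - {pu r})"
    proof -
      have "piv ` ({1..N} - {kr r}) = P - {pu r}"
        unfolding P_def pu_def using inj_on_image_set_diff[OF inj_piv, of "{1..N}" "{kr r}"] kr_range[OF r] by simp
      thus ?thesis using PRU RU puR[OF r] by auto
    qed
    also have "(\<Prod>q\<in>R \<union> (U - {pu r}). g q z) = (\<Prod>q\<in>R. g q z) * (\<Prod>q\<in>U - {pu r}. g q z)"
      by (rule prod.union_disjoint) (use finR finU RU in auto)
    also have "U - {pu r} = pu ` ({1..n} - {r})" unfolding U_pu using inj_on_image_set_diff[OF inj_pu, of "{1..n}" "{r}"] r by simp
    also have "(\<Prod>q\<in>pu ` ({1..n} - {r}). g q z) = (\<Prod>r'\<in>{1..n}-{r}. g (pu r') z)"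
      by (rule prod.reindex_cong[OF inj_on_subset[OF inj_pu]]) auto
    finally show ?thesis .
  qed
  define I where "I = {1..n::nat}"
  have finI: "finite I" unfolding I_def by simp
  define XU where "XU = (\<Prod>q\<in>R. \<Prod>r\<in>I. g q (pu r))"
  define XV where "XV = (\<Prod>q\<in>R. \<Prod>r\<in>I. g q (jr r))"
  define Y where "Y = (\<Prod>r\<in>I. \<Prod>r'\<in>I-{r}. g (pu r') (jr r))"
  define FU where "FU = (\<Prod>r\<in>I. \<Prod>r'\<in>I-{r}. g (pu r) (pu r'))"
  define FV where "FV = (\<Prod>r\<in>I. \<Prod>r'\<in>I-{r}. g (jr r) (jr r'))"
  define B where "B = (\<lambda>r. \<Prod>m\<in>{1..N} - {kr r}. \<bar>\<kappa> (piv m) - \<kappa> (jr r)\<bar>)"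
  define D where "D = (\<lambda>r. \<Prod>m\<in>{1..N} - {kr r}. \<bar>\<kappa> (piv m) - \<kappa> (piv (kr r))\<bar>)"
  have FsU: "Fs U = FU" unfolding Fs_def FU_def U_pu I_def by (rule reindex_pairs[OF inj_pu])
  have FsV: "Fs V = FV" unfolding Fs_def FV_def V_def I_def by (rule reindex_pairs[OF jr_inj])
  have FsP: "Fs P = Fs R * FU * XU^2"
  proof -
    have "Fs P = Fs R * Fs U * (\<Prod>q\<in>R. \<Prod>p\<in>U. g q p)^2"
      unfolding Fs_def PRU by (rule F_union[OF gsym finR finU RU])
    moreover have "(\<Prod>q\<in>R. \<Prod>p\<in>U. g q p) = XU"
      unfolding XU_def U_pu I_def by (rule prod.cong[OF refl], rule prod.reindex_cong[OF inj_pu]) simp_all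
    ultimately show ?thesis using FsU by simp
  qed
  have FsJ: "Fs (R \<union> V) = Fs R * FV * XV^2"
  proof -
    have "Fs (R \<union> V) = Fs R * Fs V * (\<Prod>q\<in>R. \<Prod>p\<in>V. g q p)^2"
      unfolding Fs_def by (rule F_union[OF gsym finR finV RV])
    moreover have "(\<Prod>q\<in>R. \<Prod>p\<in>V. g q p) = XV"
      unfolding XV_def V_def I_def by (rule prod.cong[OF refl], rule prod.reindex_cong[OF jr_inj]) simp_all
    ultimately show ?thesis using FsV by simp
  qed
  have Bprod: "(\<Prod>r\<in>I. B r) = XV * Y"
  proof -
    have "(\<Prod>r\<in>I. B r) = (\<Prod>r\<in>I. (\<Prod>q\<in>R. g q (jr r)) * (\<Prod>r'\<in>I-{r}. g (pu r') (jr r)))"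
      unfolding B_def I_def by (intro prod.cong refl Bdec) auto
    also have "\<dots> = (\<Prod>r\<in>I. \<Prod>q\<in>R. g q (jr r)) * Y" unfolding Y_def by (rule prod.distrib)
    also have "(\<Prod>r\<in>I. \<Prod>q\<in>R. g q (jr r)) = XV" unfolding XV_def by (rule prod.swap)
    finally show ?thesis .
  qed
  have Dprod: "(\<Prod>r\<in>I. D r) = XU * FU"
  proof -
    have "(\<Prod>r\<in>I. D r) = (\<Prod>r\<in>I. (\<Prod>q\<in>R. g q (pu r)) * (\<Prod>r'\<in>I-{r}. g (pu r') (pu r)))"
      unfolding D_def I_def pu_def by (intro prod.cong refl Bdec[unfolded pu_def]) auto
    also have "\<dots> = (\<Prod>r\<in>I. \<Prod>q\<in>R. g q (pu r)) * (\<Prod>r\<in>I. \<Prod>r'\<in>I-{r}. g (pu r') (pu r))"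
      by (rule prod.distrib)
    also have "(\<Prod>r\<in>I. \<Prod>q\<in>R. g q (pu r)) = XU" unfolding XU_def by (rule prod.swap)
    also have "(\<Prod>r\<in>I. \<Prod>r'\<in>I-{r}. g (pu r') (pu r)) = FU"
      unfolding FU_def by (rule offdiag_swap[OF finI, symmetric])
    finally show ?thesis .
  qed
  define c where "c = (\<lambda>r r'. ((\<kappa> (piv (kr r)) - \<kappa> (piv (kr r'))) * (\<kappa> (jr r) - \<kappa> (jr r')))
              / ((\<kappa> (piv (kr r)) - \<kappa> (jr r')) * (\<kappa> (jr r) - \<kappa> (piv (kr r')))))"
  define Cp where "Cp = (\<Prod>(r,r')\<in>{(r,r'). r \<in> {1..n} \<and> r' \<in> {1..n} \<and> r < r'}. c r r')"
  have csym: "\<And>p q. c p q = c q p" unfolding c_def by (rule c_sym_aux)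
  have Cp_sq: "Cp^2 = (\<Prod>r\<in>I. \<Prod>r'\<in>I-{r}. c r r')"
    unfolding Cp_def I_def by (rule sq_pairs[OF csym]) simp
  have Cp_abs: "(\<Prod>r\<in>I. \<Prod>r'\<in>I-{r}. c r r') = (\<Prod>r\<in>I. \<Prod>r'\<in>I-{r}. \<bar>c r r'\<bar>)"
  proof -
    have "(\<Prod>r\<in>I. \<Prod>r'\<in>I-{r}. c r r') \<ge> 0" using Cp_sq[symmetric] by simp
    hence "(\<Prod>r\<in>I. \<Prod>r'\<in>I-{r}. c r r') = \<bar>\<Prod>r\<in>I. \<Prod>r'\<in>I-{r}. c r r'\<bar>" by simp
    also have "\<dots> = (\<Prod>r\<in>I. \<Prod>r'\<in>I-{r}. \<bar>c r r'\<bar>)" by (simp add: abs_prod)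
    finally show ?thesis .
  qed
  have cabs: "\<bar>c r r'\<bar> = g (pu r) (pu r') * g (jr r) (jr r') / (g (pu r) (jr r') * g (jr r) (pu r'))" for r r'
    unfolding c_def g_def pu_def by (simp add: abs_mult abs_divide)
  have Y1: "(\<Prod>r\<in>I. \<Prod>r'\<in>I-{r}. g (pu r) (jr r')) = Y"
    unfolding Y_def by (rule offdiag_swap[OF finI])
  have Y2: "(\<Prod>r\<in>I. \<Prod>r'\<in>I-{r}. g (jr r) (pu r')) = Y"
    unfolding Y_def by (simp add: gsym)
  have Cp2: "Cp^2 = FU * FV / (Y * Y)"
  proof -
    have "Cp^2 = (\<Prod>r\<in>I. \<Prod>r'\<in>I-{r}. g (pu r) (pu r') * g (jr r) (jr r') / (g (pu r) (jr r') * g (jr r) (pu r')))"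
      using Cp_sq Cp_abs cabs by simp
    also have "\<dots> = FU * FV / ((\<Prod>r\<in>I. \<Prod>r'\<in>I-{r}. g (pu r) (jr r')) * (\<Prod>r\<in>I. \<Prod>r'\<in>I-{r}. g (jr r) (pu r')))"
      unfolding FU_def FV_def by (simp only: prod_dividef prod.distrib)
    finally show ?thesis using Y1 Y2 by simp
  qed
  have FRpos: "Fs R > 0" unfolding Fs_def
  proof (intro prod_pos)
    fix p q assume pq: "p \<in> R" "q \<in> R - {p}"
    hence "p \<in> {1..M}" "q \<in> {1..M}" "p \<noteq> q" using RM by blast+
    thus "g p q > 0" by (rule gpos)
  qed
  have FUpos: "FU > 0" unfolding FU_def I_def
  proof (intro prod_pos)
    fix r r' assume "r \<in> {1..n}" "r' \<in> {1..n} - {r}"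
    moreover hence "pu r \<noteq> pu r'" using inj_pu unfolding inj_on_def by blast
    ultimately show "g (pu r) (pu r') > 0" using puM by (intro gpos) blast+
  qed
  have XUpos: "XU > 0" unfolding XU_def I_def
  proof (intro prod_pos)
    fix q r assume "q \<in> R" "r \<in> {1..n}"
    moreover hence "q \<noteq> pu r" using puR by auto
    ultimately show "g q (pu r) > 0" using puM RM by (intro gpos) auto
  qed
  have Ypos: "Y > 0" unfolding Y_def I_def
  proof (intro prod_pos)
    fix r r' assume "r \<in> {1..n}" "r' \<in> {1..n} - {r}"
    moreover hence "pu r' \<noteq> jr r" using puP jrnP by force
    ultimately show "g (pu r') (jr r) > 0" using puM jrM by (intro gpos) auto
  qed
  have Bpos: "B r > 0" if r: "r \<in> I" for r unfolding B_def
  proof (intro prod_pos)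
    fix m assume m: "m \<in> {1..N} - {kr r}"
    hence "piv m \<in> P" unfolding P_def by auto
    hence "piv m \<noteq> jr r" using jrnP r unfolding I_def by auto
    hence "g (piv m) (jr r) > 0" using pivM m jrM r unfolding I_def by (intro gpos) auto
    thus "\<bar>\<kappa> (piv m) - \<kappa> (jr r)\<bar> > 0" unfolding g_def .
  qed
  have Dpos: "D r > 0" if r: "r \<in> I" for r unfolding D_def
  proof (intro prod_pos)
    fix m assume m: "m \<in> {1..N} - {kr r}"
    have kr: "kr r \<in> {1..N}" using kr_range r unfolding I_def by auto
    have "piv m \<noteq> piv (kr r)" using m kr inj_piv unfolding inj_on_def by blast
    hence "g (piv m) (piv (kr r)) > 0" using pivM m kr by (intro gpos) auto
    thus "\<bar>\<kappa> (piv m) - \<kappa> (piv (kr r))\<bar> > 0" unfolding g_def .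
  qed
  define a where "a = (\<Prod>r\<in>I. A (kr r) (jr r))"
  have apos: "\<bar>a\<bar> > 0" unfolding a_def I_def using nonzero by (simp add: prod_zero_iff)
  define sV where "sV = (\<Sum>r\<in>I. xi \<kappa> x y t (jr r))"
  define sU where "sU = (\<Sum>r\<in>I. xi \<kappa> x y t (pu r))"
  have sxV: "sx V = sV" unfolding sx_def sV_def V_def I_def
    by (rule sum.reindex_cong[OF jr_inj]) simp_all
  have sxU: "sx U = sU" unfolding sx_def sU_def U_pu I_def
    by (rule sum.reindex_cong[OF inj_pu]) simp_all
  have sxJ: "sx (R \<union> V) = sx R + sx V" unfolding sx_def
    by (rule sum.union_disjoint[OF finR finV RV])
  have sxP: "sx P = sx R + sx U" unfolding sx_def PRU
    by (rule sum.union_disjoint[OF finR finU RU])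
  have JM: "R \<union> V \<subseteq> {1..M}" using RM VM by blast
  have EJ: "E \<kappa> x y t (R \<union> V) = Vp (R \<union> V) * exp (sx (R \<union> V))" and VJpos: "Vp (R \<union> V) > 0"
    and VJsq: "(Vp (R \<union> V))^2 = Fs (R \<union> V)" using Efact[OF JM] by blast+
  have EP: "E \<kappa> x y t P = Vp P * exp (sx P)" and VPpos: "Vp P > 0"
    and VPsq: "(Vp P)^2 = Fs P" using Efact[OF PM] by blast+
  have phi0eq: "exp (phi0 N A \<kappa> piv (kr r) (jr r)) = \<bar>A (kr r) (jr r)\<bar> * B r / D r" if r: "r \<in> I" for r
  proof -
    have "\<bar>A (kr r) (jr r)\<bar> * B r / D r > 0"
      using nonzero[of r] r Bpos[OF r] Dpos[OF r] unfolding I_def by simp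
    thus ?thesis unfolding phi0_def B_def D_def by simp
  qed
  have phitsum: "(\<Sum>r\<in>{1..n}. phit N A \<kappa> x y t piv (kr r) (jr r))
      = (sV - sU) + (\<Sum>r\<in>I. phi0 N A \<kappa> piv (kr r) (jr r))"
    unfolding phit_def phi_def sV_def sU_def I_def pu_def
    by (simp add: sum.distrib sum_subtractf)
  have expphi0: "exp (\<Sum>r\<in>I. phi0 N A \<kappa> piv (kr r) (jr r)) = \<bar>a\<bar> * (\<Prod>r\<in>I. B r) / (\<Prod>r\<in>I. D r)"
  proof -
    have "exp (\<Sum>r\<in>I. phi0 N A \<kappa> piv (kr r) (jr r)) = (\<Prod>r\<in>I. exp (phi0 N A \<kappa> piv (kr r) (jr r)))"
      by (rule exp_sum[OF finI])
    also have "\<dots> = (\<Prod>r\<in>I. \<bar>A (kr r) (jr r)\<bar> * B r / D r)"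
      by (rule prod.cong[OF refl]) (rule phi0eq)
    also have "\<dots> = \<bar>a\<bar> * (\<Prod>r\<in>I. B r) / (\<Prod>r\<in>I. D r)"
      unfolding a_def by (simp only: prod_dividef prod.distrib abs_prod)
    finally show ?thesis .
  qed
  have key: "Vp (R \<union> V) / Vp P = \<bar>Cp\<bar> * (\<Prod>r\<in>I. B r) / (\<Prod>r\<in>I. D r)"
  proof (rule power2_eq_imp_eq)
    have "(Vp (R \<union> V) / Vp P)^2 = Fs R * FV * XV^2 / (Fs R * FU * XU^2)"
      by (simp only: power_divide VJsq VPsq FsJ FsP)
    also have "\<dots> = FU * FV / (Y * Y) * (XV * Y)^2 / (XU * FU)^2"
      using FRpos FUpos XUpos Ypos by (simp add: field_simps power2_eq_square)
    also have "\<dots> = (\<bar>Cp\<bar> * (\<Prod>r\<in>I. B r) / (\<Prod>r\<in>I. D r))^2"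
      by (simp only: power_divide power_mult_distrib power2_abs Cp2 Bprod Dprod)
    finally show "(Vp (R \<union> V) / Vp P)^2 = (\<bar>Cp\<bar> * (\<Prod>r\<in>I. B r) / (\<Prod>r\<in>I. D r))^2" .
    show "0 \<le> Vp (R \<union> V) / Vp P" using VJpos VPpos by simp
    have "(\<Prod>r\<in>I. B r) \<ge> 0" "(\<Prod>r\<in>I. D r) \<ge> 0"
      using Bprod Dprod XUpos FUpos Ypos by (simp_all add: XV_def g_def prod_nonneg)
    thus "0 \<le> \<bar>Cp\<bar> * (\<Prod>r\<in>I. B r) / (\<Prod>r\<in>I. D r)" by simp
  qed
  have Jeq: "(piv ` {1..N} - piv ` kr ` {1..n}) \<union> jr ` {1..n} = R \<union> V"
    unfolding R_def P_def U_def V_def ..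
  have Peq: "piv ` {1..N} = P" unfolding P_def ..
  have Cpeq: "(\<Prod>(r,r')\<in>{(r,r'). r \<in> {1..n} \<and> r' \<in> {1..n} \<and> r < r'}.
              ((\<kappa> (piv (kr r)) - \<kappa> (piv (kr r'))) * (\<kappa> (jr r) - \<kappa> (jr r')))
              / ((\<kappa> (piv (kr r)) - \<kappa> (jr r')) * (\<kappa> (jr r) - \<kappa> (piv (kr r'))))) = Cp"
    unfolding Cp_def c_def ..
  have expq: "exp (sx (R \<union> V)) / exp (sx P) = exp (sV - sU)"
    unfolding sxJ sxP sxV sxU by (simp add: exp_diff[symmetric])
  have aI: "(\<Prod>r\<in>{1..n}. A (kr r) (jr r)) = a" unfolding a_def I_def ..
  have L: "\<bar>\<Prod>r\<in>{1..n}. A (kr r) (jr r)\<bar> *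
           E \<kappa> x y t ((piv ` {1..N} - piv ` kr ` {1..n}) \<union> jr ` {1..n}) / E \<kappa> x y t (piv ` {1..N})
      = \<bar>a\<bar> * (Vp (R \<union> V) * exp (sx (R \<union> V))) / (Vp P * exp (sx P))"
    unfolding Jeq unfolding Peq aI EJ EP ..
  have Rr: "\<bar>\<Prod>(r,r')\<in>{(r,r'). r \<in> {1..n} \<and> r' \<in> {1..n} \<and> r < r'}.
              ((\<kappa> (piv (kr r)) - \<kappa> (piv (kr r'))) * (\<kappa> (jr r) - \<kappa> (jr r')))
              / ((\<kappa> (piv (kr r)) - \<kappa> (jr r')) * (\<kappa> (jr r) - \<kappa> (piv (kr r'))))\<bar>
           * exp (\<Sum>r\<in>{1..n}. phit N A \<kappa> x y t piv (kr r) (jr r))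
      = \<bar>Cp\<bar> * (exp (sV - sU) * (\<bar>a\<bar> * (\<Prod>r\<in>I. B r) / (\<Prod>r\<in>I. D r)))"
    unfolding Cpeq phitsum exp_add expphi0 ..
  have "\<bar>a\<bar> * (Vp (R \<union> V) * exp (sx (R \<union> V))) / (Vp P * exp (sx P))
      = \<bar>a\<bar> * (Vp (R \<union> V) / Vp P) * (exp (sx (R \<union> V)) / exp (sx P))" by simp
  also have "\<dots> = \<bar>a\<bar> * (\<bar>Cp\<bar> * (\<Prod>r\<in>I. B r) / (\<Prod>r\<in>I. D r)) * exp (sV - sU)"
    by (simp only: key expq)
  also have "\<dots> = \<bar>Cp\<bar> * (exp (sV - sU) * (\<bar>a\<bar> * (\<Prod>r\<in>I. B r) / (\<Prod>r\<in>I. D r)))" by simp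
  finally show ?thesis unfolding L Rr .
qed

end
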